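(* Let $L_B$ have the logistic density $\frac{\pi}{2}\operatorname{sech}^2(\pi u)$ on $\mathbb{R}$ and let $U_B$ be uniformly distributed on $[0,1]$, independent of $L_B$. Then for all integers $n\ge0$ and all $x\in\mathbb{R}$, \[ \mathbb{E}\left(x+iL_B-\tfrac12+U_B\right)^n=x^n . \] Likewise, let $L_E$ have the hyperbolic secant density $\operatorname{sech}(\pi u)$ on $\mathbb{R}$ and let $U_E$ be independent of $L_E$ with $\Pr\{U_E=0\}=\Pr\{U_E=1\}=\frac12$. Then for all integers $n\ge0$ and all $x\in\mathbb{R}$, \[ \mathbb{E}\left(x+iL_E-\tfrac12+U_E\right)^n=x^n . \]
   Context: $i=\sqrt{-1}$; $\mathbb{E}$ denotes expectation over all random variables appearing. *)

theory Defs
  imports "HOL-Probability.Probability"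
begin

definition sech :: "real \<Rightarrow> real" where
  "sech u = 1 / cosh u"

end

theory Submission
  imports Defs "HOL-Analysis.Analysis" "HOL-Real_Asymp.Real_Asymp" "HOL-Computational_Algebra.Formal_Power_Series"
begin


lemma powser_unique_zero:
  fixes a :: "nat \<Rightarrow> real"
  assumes d: "d > 0" and S: "\<And>t. \<bar>t\<bar> < d \<Longrightarrow> (\<lambda>n. a n * t ^ n) sums 0"
  shows "a n = 0"
proof (induction n rule: less_induct)
  case (less n)
  have sm: "(\<lambda>k. a (k + n) * t ^ k) sums 0" if "t \<noteq> 0" "norm t < d" for t
  proof -
    have "(\<lambda>k. a (k + n) * t ^ (k + n)) sums (0 - (\<Sum>i<n. a i * t ^ i))"
      using sums_split_initial_segment[OF S[of t]] that by simp
    also have "(\<Sum>i<n. a i * t ^ i) = 0" using less by simp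
    finally have "(\<lambda>k. a (k + n) * t ^ (k + n) / t ^ n) sums (0 / t ^ n)"
      by (intro sums_divide) simp
    moreover have "(\<lambda>k. a (k + n) * t ^ (k + n) / t ^ n) = (\<lambda>k. a (k + n) * t ^ k)"
      using that by (auto simp: power_add)
    ultimately show ?thesis by simp
  qed
  have "((\<lambda>x::real. 0) \<longlongrightarrow> a (0 + n)) (at 0)"
    by (rule powser_limit_0_strong[OF d]) (use sm in auto)
  then show ?case using LIM_unique[OF _ tendsto_const] by fastforce
qed

lemma pow_fact_le_exp:
  fixes x :: real assumes "x \<ge> 0"
  shows "x ^ j / fact j \<le> exp x"
proof -
  have "(\<Sum>i\<in>{j}. x ^ i /\<^sub>R fact i) \<le> suminf (\<lambda>i. x ^ i /\<^sub>R fact i)"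
    by (rule sum_le_suminf) (use assms summable_exp in auto)
  then show ?thesis by (simp add: exp_def divide_inverse mult.commute)
qed

lemma partial_exp_le:
  fixes x :: real
  shows "\<bar>\<Sum>j<N. x ^ j / fact j\<bar> \<le> exp \<bar>x\<bar>"
proof -
  have "\<bar>\<Sum>j<N. x ^ j / fact j\<bar> \<le> (\<Sum>j<N. \<bar>x\<bar> ^ j / fact j)"
    by (rule order_trans[OF sum_abs]) (simp add: abs_mult power_abs)
  also have "\<dots> \<le> suminf (\<lambda>i. \<bar>x\<bar> ^ i /\<^sub>R fact i)"
    by (rule order_trans[OF _ sum_le_suminf[of _ "{..<N}"]]) (use summable_exp in \<open>auto simp: divide_inverse mult.commute\<close>)
  finally show ?thesis by (simp add: exp_def)
qed

lemma exp_series_integral: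
  fixes y dens :: "real \<Rightarrow> real"
  assumes ym[measurable]: "y \<in> borel_measurable borel" and dm[measurable]: "dens \<in> borel_measurable borel"
    and dnn: "\<And>u. dens u \<ge> 0"
    and int: "integrable lborel (\<lambda>u. exp \<bar>y u\<bar> * dens u)"
  shows "\<And>j. integrable lborel (\<lambda>u. (y u) ^ j / fact j * dens u)"
    and "(\<lambda>j. \<integral>u. (y u) ^ j / fact j * dens u \<partial>lborel) sums (\<integral>u. exp (y u) * dens u \<partial>lborel)"
proof -
  show I: "integrable lborel (\<lambda>u. (y u) ^ j / fact j * dens u)" for j
  proof (rule Bochner_Integration.integrable_bound[OF int])
    show "AE x in lborel. norm ((y x) ^ j / fact j * dens x) \<le> norm (exp \<bar>y x\<bar> * dens x)"
    proof (intro AE_I2)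
      fix x
      have "\<bar>y x\<bar> ^ j / fact j \<le> exp \<bar>y x\<bar>" by (rule pow_fact_le_exp) simp
      then have "\<bar>y x\<bar> ^ j / fact j * dens x \<le> exp \<bar>y x\<bar> * dens x"
        using dnn[of x] by (rule mult_right_mono)
      then show "norm ((y x) ^ j / fact j * dens x) \<le> norm (exp \<bar>y x\<bar> * dens x)"
        using dnn[of x] by (simp add: abs_mult power_abs)
    qed
  qed measurable
  define s where "s N u = (\<Sum>j<N. (y u) ^ j / fact j) * dens u" for N u
  have sm[measurable]: "s N \<in> borel_measurable borel" for N
    unfolding s_def[abs_def] by measurable
  have "(\<lambda>N. integral\<^sup>L lborel (s N)) \<longlonglongrightarrow> (\<integral>u. exp (y u) * dens u \<partial>lborel)"
  proof (rule integral_dominated_convergence[OF _ _ int])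
    show "AE x in lborel. (\<lambda>i. s i x) \<longlonglongrightarrow> exp (y x) * dens x"
    proof (intro AE_I2)
      fix x
      have "(\<lambda>j. (y x) ^ j / fact j) sums exp (y x)"
        using exp_converges[of "y x"] by (simp add: divide_inverse mult.commute)
      then show "(\<lambda>i. s i x) \<longlonglongrightarrow> exp (y x) * dens x"
        unfolding s_def sums_def by (intro tendsto_mult_right)
    qed
    show "AE x in lborel. norm (s i x) \<le> exp \<bar>y x\<bar> * dens x" for i
      using partial_exp_le dnn by (auto simp: s_def abs_mult mult_right_mono)
  qed auto
  moreover have "integral\<^sup>L lborel (s N) = (\<Sum>j<N. \<integral>u. (y u) ^ j / fact j * dens u \<partial>lborel)" for N
    unfolding s_def sum_distrib_right
    by (subst Bochner_Integration.integral_sum[where f="\<lambda>j u. y u ^ j / fact j * dens u"]) (use I in blast)+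
  ultimately show "(\<lambda>j. \<integral>u. (y u) ^ j / fact j * dens u \<partial>lborel) sums (\<integral>u. exp (y u) * dens u \<partial>lborel)"
    unfolding sums_def by simp
qed


lemma logit_subst:
  fixes h k :: "real \<Rightarrow> real"
  assumes hc: "\<And>u. isCont h u" and hnn: "\<And>u. h u \<ge> 0"
   and hk: "\<And>s. 0 < s \<Longrightarrow> s < 1 \<Longrightarrow>
        h ((ln s - ln (1 - s)) / (2*pi)) * ((1/s + 1/(1-s)) / (2*pi)) = k s"
   and kint: "set_integrable lborel {0<..<1} k" and kI: "(k has_integral I) {0<..<1}"
  shows "integrable lborel h" "integral\<^sup>L lborel h = I"
proof -
  define g where "g s = (ln s - ln (1 - s)) / (2*pi)" for s :: real
  define g' where "g' s = (1/s + 1/(1-s)) / (2*pi)" for s :: real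
  have e01: "einterval 0 1 = {0<..<(1::real)}"
    by (auto simp: einterval_def)
  have eq: "(\<lambda>x. indicator {0<..<1} x *\<^sub>R (h (g x) * g' x)) = (\<lambda>x. indicator {0<..<1} x *\<^sub>R k x)"
  proof (rule ext)
    fix x :: real
    show "indicator {0<..<1} x *\<^sub>R (h (g x) * g' x) = indicator {0<..<1} x *\<^sub>R k x"
    proof (cases "x \<in> {0<..<1}")
      case True
      then show ?thesis using hk[of x] unfolding g_def g'_def by simp
    qed simp
  qed
  have fg: "set_integrable lborel (einterval 0 1) (\<lambda>x. h (g x) * g' x)"
    using kint unfolding e01 set_integrable_def eq .
  have deriv: "DERIV g x :> g' x" if "0 < ereal x" "ereal x < 1" for x
    using that unfolding g_def g'_def
    by (auto intro!: derivative_eq_intros simp: field_simps)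
  have A: "((ereal \<circ> g \<circ> real_of_ereal) \<longlongrightarrow> -\<infinity>) (at_right 0)"
    unfolding zero_ereal_def ereal_tendsto_simps g_def by real_asymp
  have B: "((ereal \<circ> g \<circ> real_of_ereal) \<longlongrightarrow> \<infinity>) (at_left 1)"
    unfolding one_ereal_def ereal_tendsto_simps g_def by real_asymp
  have S: "set_integrable lborel (einterval (-\<infinity>) \<infinity>) h"
       "(LBINT x=-\<infinity>..\<infinity>. h x) = (LBINT x=0..1. (h (g x) * g' x))"
    by (rule interval_integral_substitution_nonneg[OF _ deriv _ _ _ _ A B fg];
        auto simp: hc hnn g'_def einterval_iff intro!: continuous_intros)+
  show "integrable lborel h" using S(1) by (simp add: set_integrable_def)
  have "(LBINT x=0..1. (h (g x) * g' x)) = (LBINT x : {0<..<1}. (h (g x) * g' x))"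
    using interval_integral_Ioo[of 0 1] by (simp add: zero_ereal_def one_ereal_def)
  also have "\<dots> = (LBINT x : {0<..<1}. k x)"
    unfolding set_lebesgue_integral_def eq ..
  also have "\<dots> = integral {0<..<1} k"
    by (rule set_borel_integral_eq_integral(2)[OF kint])
  also have "\<dots> = I" using kI by (rule integral_unique)
  finally show "integral\<^sup>L lborel h = I"
    using S(2) by (simp add: interval_lebesgue_integral_def set_lebesgue_integral_def)
qed

lemma Gamma_reflection_real:
  fixes x :: real
  shows "Gamma x * Gamma (1 - x) = pi / sin (pi * x)"
proof -
  have "Gamma (complex_of_real x) * Gamma (complex_of_real (1 - x)) =
        complex_of_real pi / sin (complex_of_real (pi * x))"
    using Gamma_reflection_complex[of "complex_of_real x"] by simp
  then have "complex_of_real (Gamma x * Gamma (1 - x)) = complex_of_real (pi / sin (pi * x))"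
    by (simp only: Gamma_complex_of_real sin_of_real of_real_mult of_real_divide)
      (metis of_real_mult sin_of_real)
  then show ?thesis by (simp only: of_real_eq_iff)
qed

lemma exp_logit:
  assumes "0 < s" "s < 1"
  shows "exp (t * ((ln s - ln (1 - s)) / (2*pi))) = s powr (t/(2*pi)) * (1-s) powr (-(t/(2*pi)))"
proof -
  have "s powr (t/(2*pi)) * (1-s) powr (-(t/(2*pi))) = exp (t/(2*pi) * ln s) * exp (-(t/(2*pi)) * ln (1-s))"
    using assms by (simp add: powr_def)
  also have "\<dots> = exp (t * ((ln s - ln (1 - s)) / (2*pi)))"
    by (simp add: exp_add[symmetric] field_simps)
  finally show ?thesis ..
qed

lemma cosh_logit_sq:
  assumes "0 < s" "s < 1"
  shows "(cosh (pi * ((ln s - ln (1 - s)) / (2*pi))))\<^sup>2 = 1 / (4 * s * (1 - s))"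
proof -
  define E where "E = exp (pi * ((ln s - ln (1 - s)) / (2*pi)))"
  have Ep: "E > 0" by (simp add: E_def)
  have "E\<^sup>2 = exp (ln s - ln (1 - s))"
    unfolding E_def power2_eq_square exp_add[symmetric] by (simp add: field_simps)
  also have "\<dots> = s / (1 - s)" using assms by (simp add: exp_diff)
  finally have E2: "E\<^sup>2 = s / (1 - s)" .
  have C: "cosh (pi * ((ln s - ln (1 - s)) / (2*pi))) = (E + inverse E) / 2"
    unfolding E_def cosh_def by (simp add: exp_minus)
  have "(cosh (pi * ((ln s - ln (1 - s)) / (2*pi))))\<^sup>2 = ((E + inverse E) / 2)\<^sup>2"
    by (simp only: C)
  also have "\<dots> = (E\<^sup>2 + 2 + 1 / E\<^sup>2) / 4"
    using Ep by (simp add: power2_eq_square field_simps)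
  also have "\<dots> = 1 / (4 * s * (1 - s))"
    unfolding E2 using assms by (simp add: field_simps)
  finally show ?thesis .
qed

lemma cosh_ne: "cosh (x::real) \<noteq> 0"
  using cosh_real_pos[of x] by linarith

lemma mgf_logistic:
  fixes t :: real
  assumes t: "\<bar>t\<bar> < 2*pi"
  shows "integrable lborel (\<lambda>u. exp (t*u) * (pi/2 * (sech (pi*u))\<^sup>2))"
    and "(\<integral>u. exp (t*u) * (pi/2 * (sech (pi*u))\<^sup>2) \<partial>lborel) = Beta (1 + t/(2*pi)) (1 - t/(2*pi))"
proof -
  define a where "a = t/(2*pi)"
  have a: "1 + a > 0" "1 - a > 0" using t pi_gt_zero unfolding a_def by (auto simp: field_simps abs_less_iff)
  define k where "k s = s powr ((1 + a) - 1) * (1 - s) powr ((1 - a) - 1)" for s :: real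
  have kint: "set_integrable lborel {0<..<1} k"
    unfolding k_def by (rule set_integrable_subset[OF integrable_Beta[OF a]]) auto
  have kI: "(k has_integral Beta (1 + a) (1 - a)) {0<..<1}"
    unfolding k_def using has_integral_Beta_real[OF a] by (simp add: has_integral_Icc_iff_Ioo)
  have hk: "exp (t * ((ln s - ln (1 - s)) / (2*pi))) * (pi/2 * (sech (pi * ((ln s - ln (1 - s)) / (2*pi))))\<^sup>2)
        * ((1/s + 1/(1-s)) / (2*pi)) = k s" if s: "0 < s" "s < 1" for s
  proof -
    have S: "(sech (pi * ((ln s - ln (1 - s)) / (2*pi))))\<^sup>2 = 4 * s * (1 - s)"
      using cosh_logit_sq[OF s] s unfolding sech_def by (simp add: power_one_over)
    show ?thesis
      unfolding exp_logit[OF s] S k_def a_def using s by (simp add: field_simps)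
  qed
  have hc: "isCont (\<lambda>u. exp (t*u) * (pi/2 * (sech (pi*u))\<^sup>2)) u" for u
    unfolding sech_def by (intro continuous_intros) (auto simp: cosh_ne)
  show "integrable lborel (\<lambda>u. exp (t*u) * (pi/2 * (sech (pi*u))\<^sup>2))"
    by (rule logit_subst(1)[OF hc _ hk kint kI]) auto
  show "(\<integral>u. exp (t*u) * (pi/2 * (sech (pi*u))\<^sup>2) \<partial>lborel) = Beta (1 + t/(2*pi)) (1 - t/(2*pi))"
    using logit_subst(2)[OF hc _ hk kint kI] unfolding a_def by auto
qed

lemma mgf_sech:
  fixes t :: real
  assumes t: "\<bar>t\<bar> < pi"
  shows "integrable lborel (\<lambda>u. exp (t*u) * sech (pi*u))"
    and "(\<integral>u. exp (t*u) * sech (pi*u) \<partial>lborel) = Beta (t/(2*pi) + 1/2) (1/2 - t/(2*pi)) / pi"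
proof -
  define a where "a = t/(2*pi)"
  have a: "a + 1/2 > 0" "1/2 - a > 0" using t pi_gt_zero unfolding a_def by (auto simp: field_simps abs_less_iff)
  define k where "k s = s powr ((a + 1/2) - 1) * (1 - s) powr ((1/2 - a) - 1) / pi" for s :: real
  have kint: "set_integrable lborel {0<..<1} k"
    unfolding k_def by (intro set_integrable_divide set_integrable_subset[OF integrable_Beta[OF a]]) auto
  have kI: "(k has_integral Beta (a + 1/2) (1/2 - a) / pi) {0<..<1}"
    unfolding k_def using has_integral_divide[OF has_integral_Beta_real[OF a], of pi]
    by (simp add: has_integral_Icc_iff_Ioo)
  have hk: "exp (t * ((ln s - ln (1 - s)) / (2*pi))) * sech (pi * ((ln s - ln (1 - s)) / (2*pi)))
        * ((1/s + 1/(1-s)) / (2*pi)) = k s" if s: "0 < s" "s < 1" for s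
  proof -
    define P where "P = sqrt s"
    define Q where "Q = sqrt (1 - s)"
    have P: "P > 0" "P\<^sup>2 = s" using s by (auto simp: P_def)
    have Q: "Q > 0" "Q\<^sup>2 = 1 - s" using s by (auto simp: Q_def)
    have E: "exp (pi * ((ln s - ln (1 - s)) / (2*pi))) = P / Q"
      unfolding exp_logit[OF s] using s by (simp add: powr_minus_divide powr_half_sqrt P_def Q_def)
    have "cosh (pi * ((ln s - ln (1 - s)) / (2*pi))) = (P/Q + Q/P) / 2"
      unfolding cosh_def exp_minus E by simp
    also have "\<dots> = 1 / (2 * P * Q)"
      using P Q by (simp add: field_simps power2_eq_square)
    finally have C: "sech (pi * ((ln s - ln (1 - s)) / (2*pi))) = 2 * P * Q"
      unfolding sech_def by simp
    have k: "k s = s powr a * (1 - s) powr (- a) / (P * Q * pi)"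
    proof -
      have "k s = s powr (a - 1/2) * (1 - s) powr (-a - 1/2) / pi"
        unfolding k_def by (simp add: algebra_simps)
      also have "\<dots> = s powr a / P * ((1 - s) powr (-a) / Q) / pi"
        using s by (simp add: powr_diff powr_half_sqrt P_def Q_def)
      finally show ?thesis by simp
    qed
    have X: "exp (t * ((ln s - ln (1 - s)) / (2*pi))) = s powr a * (1 - s) powr (-a)"
      unfolding exp_logit[OF s] a_def ..
    have "1/s + 1/(1-s) = 1/P\<^sup>2 + 1/Q\<^sup>2" using P Q by simp
    also have "\<dots> = 1/(P\<^sup>2 * Q\<^sup>2)" using P Q s by (simp add: field_simps)
    finally have D: "1/s + 1/(1-s) = 1/(P\<^sup>2 * Q\<^sup>2)" .
    have F: "2*P*Q * ((1/s + 1/(1-s))/(2*pi)) = 1/(P*Q*pi)"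
      unfolding D using P Q s by (simp add: field_simps power2_eq_square)
    have "s powr a * (1 - s) powr (-a) * (2*P*Q) * ((1/s + 1/(1-s))/(2*pi)) =
          s powr a * (1 - s) powr (-a) * (2*P*Q * ((1/s + 1/(1-s))/(2*pi)))"
      by (simp only: mult.assoc)
    also have "\<dots> = s powr a * (1 - s) powr (-a) / (P * Q * pi)"
      unfolding F by simp
    finally show ?thesis
      unfolding C k X .
  qed
  have hc: "isCont (\<lambda>u. exp (t*u) * sech (pi*u)) u" for u
    unfolding sech_def by (intro continuous_intros) (auto simp: cosh_ne)
  have hnn: "exp (t*u) * sech (pi*u) \<ge> 0" for u
    unfolding sech_def by simp
  show "integrable lborel (\<lambda>u. exp (t*u) * sech (pi*u))"
    by (rule logit_subst(1)[OF hc hnn hk kint kI])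
  show "(\<integral>u. exp (t*u) * sech (pi*u) \<partial>lborel) = Beta (t/(2*pi) + 1/2) (1/2 - t/(2*pi)) / pi"
    using logit_subst(2)[OF hc hnn hk kint kI] unfolding a_def by auto
qed


lemma mgf_to_moments:
  fixes dens :: "real \<Rightarrow> real"
  assumes dm[measurable]: "dens \<in> borel_measurable borel" and dnn: "\<And>u. dens u \<ge> 0"
    and r: "r > 0"
    and mgf: "\<And>t. \<bar>t\<bar> < r \<Longrightarrow> integrable lborel (\<lambda>u. exp (t*u) * dens u)"
  shows "\<And>j. integrable lborel (\<lambda>u. u^j * dens u)"
    and "\<And>t. \<bar>t\<bar> < r \<Longrightarrow> (\<lambda>j. (\<integral>u. u^j * dens u \<partial>lborel) / fact j * t^j) sums (\<integral>u. exp (t*u) * dens u \<partial>lborel)"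
    and "\<And>t. \<bar>t\<bar> < r \<Longrightarrow> summable (\<lambda>j. norm ((\<integral>u. u^j * dens u \<partial>lborel) / fact j * t^j))"
proof -
  have absint: "integrable lborel (\<lambda>u. exp \<bar>s*u\<bar> * dens u)" if s: "\<bar>s\<bar> < r" for s
  proof (rule Bochner_Integration.integrable_bound)
    show "integrable lborel (\<lambda>u. exp (s*u) * dens u + exp ((-s)*u) * dens u)"
      using mgf[of s] mgf[of "-s"] s by auto
    show "AE x in lborel. norm (exp \<bar>s*x\<bar> * dens x) \<le> norm (exp (s*x) * dens x + exp ((-s)*x) * dens x)"
    proof (intro AE_I2)
      fix x
      have "exp \<bar>s*x\<bar> \<le> exp (s*x) + exp ((-s)*x)"
        by (cases "s*x \<ge> 0") (auto simp: add_increasing add_increasing2)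
      then have "exp \<bar>s*x\<bar> * dens x \<le> (exp (s*x) + exp ((-s)*x)) * dens x"
        using dnn[of x] by (rule mult_right_mono)
      then show "norm (exp \<bar>s*x\<bar> * dens x) \<le> norm (exp (s*x) * dens x + exp ((-s)*x) * dens x)"
        using dnn[of x] by (simp add: algebra_simps)
    qed
  qed measurable
  show mi: "integrable lborel (\<lambda>u. u^j * dens u)" for j
  proof -
    have "\<bar>r/2\<bar> < r" using r by simp
    from exp_series_integral(1)[of "\<lambda>u. r/2*u" dens j, OF _ dm dnn absint[OF this]]
    have "integrable lborel (\<lambda>u. (fact j / (r/2)^j) * ((r/2*u)^j / fact j * dens u))"
      by (intro integrable_mult_right) auto
    also have "(\<lambda>u. (fact j / (r/2)^j) * ((r/2*u)^j / fact j * dens u)) = (\<lambda>u. u^j * dens u)"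
    proof (rule ext)
      fix u :: real
      have "(r/2*u)^j = (r/2)^j * u^j" by (simp only: power_mult_distrib)
      then show "(fact j / (r/2)^j) * ((r/2*u)^j / fact j * dens u) = u^j * dens u"
        using r by (simp add: field_simps)
    qed
    finally show ?thesis .
  qed
  have trm: "(\<integral>u. (y*u)^j / fact j * dens u \<partial>lborel) = (\<integral>u. u^j * dens u \<partial>lborel) / fact j * y^j" for y j
  proof -
    have "(\<lambda>u. (y*u)^j / fact j * dens u) = (\<lambda>u. (y^j / fact j) * (u^j * dens u))"
      by (auto simp: fun_eq_iff power_mult_distrib)
    then show ?thesis by simp
  qed
  show "(\<lambda>j. (\<integral>u. u^j * dens u \<partial>lborel) / fact j * t^j) sums (\<integral>u. exp (t*u) * dens u \<partial>lborel)"
    if t: "\<bar>t\<bar> < r" for t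
    using exp_series_integral(2)[of "\<lambda>u. t*u" dens, OF _ dm dnn absint[OF t]] unfolding trm by simp
  show "summable (\<lambda>j. norm ((\<integral>u. u^j * dens u \<partial>lborel) / fact j * t^j))"
    if t: "\<bar>t\<bar> < r" for t
  proof (rule summable_comparison_test)
    have ai: "integrable lborel (\<lambda>u. exp \<bar>\<bar>t\<bar> * \<bar>u\<bar>\<bar> * dens u)"
      using absint[OF t] by (simp add: abs_mult)
    have "(\<lambda>j. \<integral>u. (\<bar>t\<bar>*\<bar>u\<bar>)^j / fact j * dens u \<partial>lborel) sums (\<integral>u. exp (\<bar>t\<bar>*\<bar>u\<bar>) * dens u \<partial>lborel)"
      by (rule exp_series_integral(2)[of "\<lambda>u. \<bar>t\<bar>*\<bar>u\<bar>" dens, OF _ dm dnn ai]) measurable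
    then show "summable (\<lambda>j. \<integral>u. (\<bar>t\<bar>*\<bar>u\<bar>)^j / fact j * dens u \<partial>lborel)"
      by (rule sums_summable)
    show "\<exists>N. \<forall>n\<ge>N. norm (norm ((\<integral>u. u^n * dens u \<partial>lborel) / fact n * t^n)) \<le>
            (\<integral>u. (\<bar>t\<bar>*\<bar>u\<bar>)^n / fact n * dens u \<partial>lborel)"
    proof (intro exI allI impI)
      fix n :: nat
      have "norm (\<integral>u. u^n * dens u \<partial>lborel) \<le> (\<integral>u. norm (u^n * dens u) \<partial>lborel)"
        by (rule integral_norm_bound)
      also have "(\<lambda>u. norm (u^n * dens u)) = (\<lambda>u. \<bar>u\<bar>^n * dens u)"
        using dnn by (auto simp: fun_eq_iff abs_mult power_abs)
      finally have "\<bar>\<integral>u. u^n * dens u \<partial>lborel\<bar> * (\<bar>t\<bar>^n / fact n) \<le> (\<integral>u. \<bar>u\<bar>^n * dens u \<partial>lborel) * (\<bar>t\<bar>^n / fact n)"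
        by (intro mult_right_mono) auto
      also have "\<dots> = (\<integral>u. (\<bar>t\<bar>*\<bar>u\<bar>)^n / fact n * dens u \<partial>lborel)"
      proof -
        have "(\<lambda>u. (\<bar>t\<bar>*\<bar>u\<bar>)^n / fact n * dens u) = (\<lambda>u. (\<bar>t\<bar>^n / fact n) * (\<bar>u\<bar>^n * dens u))"
          by (auto simp: fun_eq_iff power_mult_distrib)
        then show ?thesis by simp
      qed
      finally show "norm (norm ((\<integral>u. u^n * dens u \<partial>lborel) / fact n * t^n)) \<le>
            (\<integral>u. (\<bar>t\<bar>*\<bar>u\<bar>)^n / fact n * dens u \<partial>lborel)"
        by (simp add: abs_mult power_abs)
    qed
  qed
qed


lemma fps_eq_analytic:
  fixes A S R :: "real fps" and fA fS :: "real \<Rightarrow> real"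
  assumes d: "d > 0"
  and As: "\<And>t. \<bar>t\<bar> < d \<Longrightarrow> (\<lambda>n. (fps_nth A n) * t^n) sums fA t"
  and An: "\<And>t. \<bar>t\<bar> < d \<Longrightarrow> summable (\<lambda>n. norm ((fps_nth A n) * t^n))"
  and Ss: "\<And>t. \<bar>t\<bar> < d \<Longrightarrow> (\<lambda>n. (fps_nth S n) * t^n) sums fS t"
  and Sn: "\<And>t. \<bar>t\<bar> < d \<Longrightarrow> summable (\<lambda>n. norm ((fps_nth S n) * t^n))"
  and Rs: "\<And>t. \<bar>t\<bar> < d \<Longrightarrow> (\<lambda>n. (fps_nth R n) * t^n) sums (fA t * fS t)"
  shows "A * S = R"
proof (rule fps_ext)
  fix n
  have "(\<lambda>n. ((fps_nth (A*S) n) - (fps_nth R n)) * t^n) sums 0" if t: "\<bar>t\<bar> < d" for t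
  proof -
    have "(\<lambda>k. \<Sum>i\<le>k. ((fps_nth A i) * t^i) * ((fps_nth S (k-i)) * t^(k-i))) sums
          ((\<Sum>k. (fps_nth A k) * t^k) * (\<Sum>k. (fps_nth S k) * t^k))"
      by (rule Cauchy_product_sums[OF An[OF t] Sn[OF t]])
    also have "(\<Sum>k. (fps_nth A k) * t^k) = fA t" using As[OF t] by (rule sums_unique[symmetric])
    also have "(\<Sum>k. (fps_nth S k) * t^k) = fS t" using Ss[OF t] by (rule sums_unique[symmetric])
    also have "(\<lambda>k. \<Sum>i\<le>k. ((fps_nth A i) * t^i) * ((fps_nth S (k-i)) * t^(k-i))) = (\<lambda>k. (fps_nth (A*S) k) * t^k)"
    proof (rule ext)
      fix k
      have "(\<Sum>i\<le>k. ((fps_nth A i) * t^i) * ((fps_nth S (k-i)) * t^(k-i))) = (\<Sum>i\<le>k. ((fps_nth A i) * (fps_nth S (k-i))) * t^k)"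
        by (intro sum.cong refl) (simp add: power_add[symmetric])
      also have "\<dots> = (fps_nth (A*S) k) * t^k"
        by (simp add: fps_mult_nth atLeast0AtMost sum_distrib_right)
      finally show "(\<Sum>i\<le>k. ((fps_nth A i) * t^i) * ((fps_nth S (k-i)) * t^(k-i))) = (fps_nth (A*S) k) * t^k" .
    qed
    finally have "(\<lambda>k. (fps_nth (A*S) k) * t^k) sums (fA t * fS t)" .
    from sums_diff[OF this Rs[OF t]] show ?thesis by (simp add: algebra_simps)
  qed
  from powser_unique_zero[OF d this, of n] show "(fps_nth (A*S) n) = (fps_nth R n)" by simp
qed

lemma Beta_logistic_sin:
  assumes t: "\<bar>t\<bar> < 2*pi"
  shows "Beta (1 + t/(2*pi)) (1 - t/(2*pi)) * sin (t/2) = t/2"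
proof (cases "t = 0")
  case False
  define a where "a = t/(2*pi)"
  have a: "a \<noteq> 0" "\<bar>a\<bar> < 1" using t False pi_gt_zero by (auto simp: a_def field_simps)
  have nz: "a \<notin> \<int>\<^sub>\<le>\<^sub>0"
  proof
    assume "a \<in> \<int>\<^sub>\<le>\<^sub>0"
    then obtain n :: nat where "a = - of_nat n" by (auto elim!: nonpos_Ints_cases')
    with a show False by (cases n) auto
  qed
  have "Beta (1 + a) (1 - a) = Gamma (a + 1) * Gamma (1 - a)"
    by (simp add: Beta_def add.commute Gamma_numeral)
  also have "\<dots> = a * (Gamma a * Gamma (1 - a))" by (simp add: Gamma_plus1[OF nz])
  also have "\<dots> = a * (pi / sin (pi * a))" by (simp add: Gamma_reflection_real)
  finally have B: "Beta (1 + a) (1 - a) = a * (pi / sin (pi * a))" .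
  have sn: "sin (pi * a) \<noteq> 0"
  proof
    assume "sin (pi * a) = 0"
    then obtain n :: int where "pi * a = of_int n * pi" by (auto simp: sin_zero_iff_int2)
    then have "a = of_int n" using pi_gt_zero by simp
    with a show False by (auto simp: abs_less_iff)
  qed
  have e: "t/2 = pi * a" by (simp add: a_def)
  show ?thesis unfolding a_def[symmetric] e B using sn by simp
qed simp

lemma Beta_sech_cos:
  assumes t: "\<bar>t\<bar> < pi"
  shows "Beta (t/(2*pi) + 1/2) (1/2 - t/(2*pi)) / pi * cos (t/2) = 1"
proof -
  define a where "a = t/(2*pi)"
  have "Beta (a + 1/2) (1/2 - a) = Gamma (a + 1/2) * Gamma (1 - (a + 1/2))"
    by (simp add: Beta_def)
  also have "\<dots> = pi / sin (pi * (a + 1/2))" by (rule Gamma_reflection_real)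
  also have "sin (pi * (a + 1/2)) = cos (t/2)"
    by (simp add: a_def distrib_left sin_add)
  finally have B: "Beta (a + 1/2) (1/2 - a) = pi / cos (t/2)" .
  have "cos (t/2) > 0" using t by (intro cos_gt_zero_pi) auto
  then show ?thesis using B unfolding a_def[symmetric] by simp
qed


definition tw :: "real fps \<Rightarrow> complex fps" where
  "tw F = Abs_fps (\<lambda>n. \<i>^n * complex_of_real (fps_nth F n))"

lemma tw_nth: "fps_nth (tw F) n = \<i>^n * complex_of_real (fps_nth F n)"
  by (simp add: tw_def)

lemma tw_mult: "tw (F * G) = tw F * tw G"
proof (rule fps_ext)
  fix n
  have "fps_nth (tw F * tw G) n = (\<Sum>i=0..n. (\<i>^i * of_real (fps_nth F i)) * (\<i>^(n-i) * of_real (fps_nth G (n-i))))"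
    by (simp add: fps_mult_nth tw_nth)
  also have "\<dots> = (\<Sum>i=0..n. \<i>^n * of_real (fps_nth F i * fps_nth G (n-i)))"
  proof (intro sum.cong refl)
    fix i assume "i \<in> {0..n}"
    then have "\<i>^i * \<i>^(n-i) = (\<i>^n :: complex)" by (simp add: power_add[symmetric])
    then show "(\<i>^i * of_real (fps_nth F i)) * (\<i>^(n-i) * of_real (fps_nth G (n-i))) =
               \<i>^n * of_real (fps_nth F i * fps_nth G (n-i))"
      by (metis (no_types, lifting) mult.assoc mult.left_commute of_real_mult)
  qed
  also have "\<dots> = fps_nth (tw (F * G)) n"
    by (simp add: tw_nth fps_mult_nth sum_distrib_left)
  finally show "fps_nth (tw (F * G)) n = fps_nth (tw F * tw G) n" ..
qed

lemma i_pow_even: "\<i> ^ (2*k) = ((-1)^k :: complex)"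
  by (simp add: power_mult)

lemma coeff_identity:
  fixes m c :: "nat \<Rightarrow> real"
  assumes H: "Abs_fps (\<lambda>j. \<i>^j * complex_of_real (m j / fact j)) * Abs_fps (\<lambda>k. complex_of_real (c k / fact k)) = 1"
  shows "(\<Sum>j\<le>k. of_nat (k choose j) * \<i>^j * complex_of_real (m j) * complex_of_real (c (k-j))) =
         (if k = 0 then 1 else 0)"
proof -
  have "fps_nth (Abs_fps (\<lambda>j. \<i>^j * complex_of_real (m j / fact j)) * Abs_fps (\<lambda>k. complex_of_real (c k / fact k))) k
        = (if k = 0 then 1 else 0)"
    unfolding H by simp
  then have E: "(\<Sum>j\<le>k. (\<i>^j * complex_of_real (m j / fact j)) * complex_of_real (c (k-j) / fact (k-j))) = (if k = 0 then 1 else 0)"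
    by (simp add: fps_mult_nth atLeast0AtMost)
  have "(\<Sum>j\<le>k. of_nat (k choose j) * \<i>^j * complex_of_real (m j) * complex_of_real (c (k-j))) =
        fact k * (\<Sum>j\<le>k. (\<i>^j * complex_of_real (m j / fact j)) * complex_of_real (c (k-j) / fact (k-j)))"
    unfolding sum_distrib_left
  proof (intro sum.cong refl)
    fix j assume "j \<in> {..k}"
    then have "(of_nat (k choose j) :: complex) = fact k / (fact j * fact (k - j))"
      by (intro binomial_fact) auto
    then show "of_nat (k choose j) * \<i>^j * complex_of_real (m j) * complex_of_real (c (k-j)) =
          fact k * ((\<i>^j * complex_of_real (m j / fact j)) * complex_of_real (c (k-j) / fact (k-j)))"
      by (simp add: field_simps)
  qed
  also have "\<dots> = (if k = 0 then 1 else 0)" unfolding E by simp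
  finally show ?thesis .
qed


definition cU :: "nat \<Rightarrow> real" where
  "cU k = ((1/2)^(k+1) - (-1/2)^(k+1)) / (k+1)"

definition cB :: "nat \<Rightarrow> real" where
  "cB k = ((1/2)^k + (-1/2)^k) / 2"

lemma tw_sin:
  "tw (Abs_fps (\<lambda>n. sin_coeff n / 2^n)) =
   fps_const (\<i>/2) * (fps_X * Abs_fps (\<lambda>k. complex_of_real (cU k / fact k)))"
proof (rule fps_ext)
  fix n
  show "fps_nth (tw (Abs_fps (\<lambda>n. sin_coeff n / 2^n))) n =
        fps_nth (fps_const (\<i>/2) * (fps_X * Abs_fps (\<lambda>k. complex_of_real (cU k / fact k)))) n"
  proof (cases n)
    case 0 then show ?thesis by (simp add: tw_nth sin_coeff_def)
  next
    case (Suc m)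
    show ?thesis
    proof (cases "even m")
      case True
      then obtain k where m: "m = 2*k" by (auto elim: evenE)
      have n: "n = Suc (2*k)" using Suc m by simp
      have s: "sin_coeff n = (-1)^k / fact n" unfolding sin_coeff_def n by simp
      have c: "cU m = 2 * (1/2)^(2*k+1) / (2*k+1)"
        unfolding cU_def m by (simp add: power_minus_odd[of _ "2*k+1"])
      have f: "fact n = (2*k+1) * (fact (2*k) :: real)" unfolding n by simp
      have ip: "\<i>^n = \<i> * (-1)^k" unfolding n by (simp add: power_mult)
      have "fps_nth (tw (Abs_fps (\<lambda>n. sin_coeff n / 2^n))) n = \<i> * of_real ((-1)^k * (-1)^k / fact n / 2^n)"
        by (simp add: tw_nth s ip)
      also have "(-1)^k * (-1)^k = (1::real)" by (simp add: power_mult_distrib[symmetric])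
      also have "fps_nth (fps_const (\<i>/2) * (fps_X * Abs_fps (\<lambda>k. complex_of_real (cU k / fact k)))) n
          = \<i>/2 * of_real (cU m / fact m)" using Suc by simp
      moreover have "cU m / fact m / 2 = 1 / fact n / 2^n"
      proof -
        have "cU m / fact m / 2 = (2 * (1/2)^(2*k+1) / (2*k+1)) / fact (2*k) / 2" using c m by simp
        also have "\<dots> = 1 / ((2*k+1) * fact (2*k)) / 2^(2*k+1)" by (simp add: field_simps power_one_over)
        also have "\<dots> = 1 / fact n / 2^n" using f n by (simp add: algebra_simps)
        finally show ?thesis .
      qed
      ultimately show ?thesis
        by (metis (no_types, lifting) mult.assoc mult_1 of_real_divide of_real_numeral divide_divide_eq_left' times_divide_eq_right mult.commute)
    next
      case False
      then obtain k where m: "m = 2*k+1" by (auto elim: oddE)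
      have "sin_coeff n = 0" unfolding sin_coeff_def using Suc m by simp
      moreover have "cU m = 0" unfolding cU_def m by simp
      ultimately show ?thesis using Suc by (simp add: tw_nth)
    qed
  qed
qed

lemma tw_cos:
  "tw (Abs_fps (\<lambda>n. cos_coeff n / 2^n)) = Abs_fps (\<lambda>k. complex_of_real (cB k / fact k))"
proof (rule fps_ext)
  fix n
  show "fps_nth (tw (Abs_fps (\<lambda>n. cos_coeff n / 2^n))) n = fps_nth (Abs_fps (\<lambda>k. complex_of_real (cB k / fact k))) n"
  proof (cases "even n")
    case True
    then obtain k where n: "n = 2*k" by (auto elim: evenE)
    have "fps_nth (tw (Abs_fps (\<lambda>n. cos_coeff n / 2^n))) n = of_real ((-1)^k * ((-1)^k / fact n / 2^n))"
      by (simp add: tw_nth cos_coeff_def n power_mult)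
    also have "(-1)^k * ((-1)^k / fact n / 2^n) = (1::real) / fact n / 2^n"
      by (simp add: power_mult_distrib[symmetric])
    also have "(1::real) / fact n / 2^n = cB n / fact n"
    proof -
      have "cB n = (1/2)^n" unfolding cB_def using True by simp
      then show ?thesis by (simp add: power_one_over)
    qed
    finally show ?thesis by simp
  next
    case False
    then have "cB n = 0" unfolding cB_def by (simp add: power_minus_odd)
    then show ?thesis using False by (simp add: tw_nth cos_coeff_def)
  qed
qed


lemma sech_meas[measurable]: "(\<lambda>u. sech (pi*u)) \<in> borel_measurable borel"
  unfolding sech_def by (intro borel_measurable_continuous_onI continuous_intros) (auto simp: cosh_ne)

lemma key1:
  fixes k :: nat
  defines "dens \<equiv> \<lambda>u. pi/2 * (sech (pi*u))\<^sup>2"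
  shows "\<And>j. integrable lborel (\<lambda>u. u^j * dens u)"
    and "(\<Sum>j\<le>k. of_nat (k choose j) * \<i>^j * complex_of_real (\<integral>u. u^j * dens u \<partial>lborel) * complex_of_real (cU (k-j)))
         = (if k = 0 then 1 else 0)"
proof -
  have dm[measurable]: "dens \<in> borel_measurable borel" unfolding dens_def by measurable
  have dnn: "dens u \<ge> 0" for u unfolding dens_def by simp
  have mgf: "\<And>t. \<bar>t\<bar> < 1 \<Longrightarrow> integrable lborel (\<lambda>u. exp (t*u) * dens u)"
    unfolding dens_def using pi_gt3 by (intro mgf_logistic(1)) auto
  note MM = mgf_to_moments[OF dm dnn zero_less_one mgf]
  show "\<And>j. integrable lborel (\<lambda>u. u^j * dens u)" by (rule MM(1))
  define mom where "mom j = (\<integral>u. u^j * dens u \<partial>lborel)" for j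
  define A where "A = Abs_fps (\<lambda>j. mom j / fact j)"
  define S where "S = Abs_fps (\<lambda>n. sin_coeff n / 2^n)"
  define R where "R = Abs_fps (\<lambda>n. if n = 1 then 1/2 else (0::real))"
  have sconv: "sin_coeff n *\<^sub>R (t/2)^n = fps_nth S n * t^n" for n t
    by (simp add: S_def power_divide)
  have "A * S = R"
  proof (rule fps_eq_analytic[OF zero_less_one, where fA = "\<lambda>t. \<integral>u. exp (t*u) * dens u \<partial>lborel"
          and fS = "\<lambda>t. sin (t/2)"])
    show "(\<lambda>n. fps_nth A n * t^n) sums (\<integral>u. exp (t*u) * dens u \<partial>lborel)" if "\<bar>t\<bar> < 1" for t
      using MM(2) that unfolding A_def mom_def by simp
    show "summable (\<lambda>n. norm (fps_nth A n * t^n))" if "\<bar>t\<bar> < 1" for t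
      using MM(3) that unfolding A_def mom_def by simp
    show "(\<lambda>n. fps_nth S n * t^n) sums sin (t/2)" for t
      using sin_converges[of "t/2"] unfolding sconv .
    show "summable (\<lambda>n. norm (fps_nth S n * t^n))" for t
      using summable_norm_sin[of "t/2"] unfolding sconv .
    show "(\<lambda>n. fps_nth R n * t^n) sums ((\<integral>u. exp (t*u) * dens u \<partial>lborel) * sin (t/2))"
      if t: "\<bar>t\<bar> < 1" for t
    proof -
      have E: "(\<integral>u. exp (t*u) * dens u \<partial>lborel) * sin (t/2) = t/2"
      proof -
        have t2: "\<bar>t\<bar> < 2*pi" using t pi_gt3 by auto
        show ?thesis unfolding dens_def mgf_logistic(2)[OF t2] by (rule Beta_logistic_sin[OF t2])
      qed
      have S: "(\<lambda>n. if n = 1 then t^n/2 else 0) sums (t^1/2)" by (rule sums_single)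
      have F: "(\<lambda>n. fps_nth R n * t^n) = (\<lambda>n. if n = 1 then t^n/2 else 0)"
        by (auto simp: R_def fun_eq_iff)
      show ?thesis unfolding F E using S by simp
    qed
  qed
  then have "tw A * tw S = tw R" by (metis tw_mult)
  moreover have "tw R = fps_const (\<i>/2) * fps_X"
    by (rule fps_ext) (auto simp: tw_nth R_def le_Suc_eq)
  moreover note tw_sin
  moreover have "tw A = Abs_fps (\<lambda>j. \<i>^j * complex_of_real (mom j / fact j))"
    by (simp add: tw_def A_def)
  ultimately have "(fps_const (\<i>/2) * fps_X) * (Abs_fps (\<lambda>j. \<i>^j * complex_of_real (mom j / fact j)) *
        Abs_fps (\<lambda>k. complex_of_real (cU k / fact k))) = (fps_const (\<i>/2) * fps_X) * 1"
    unfolding S_def by (simp add: ac_simps)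
  then have "Abs_fps (\<lambda>j. \<i>^j * complex_of_real (mom j / fact j)) *
        Abs_fps (\<lambda>k. complex_of_real (cU k / fact k)) = 1"
    by (subst (asm) mult_cancel_left) auto
  from coeff_identity[OF this, of k]
  show "(\<Sum>j\<le>k. of_nat (k choose j) * \<i>^j * complex_of_real (\<integral>u. u^j * dens u \<partial>lborel) * complex_of_real (cU (k-j)))
         = (if k = 0 then 1 else 0)" unfolding mom_def .
qed

lemma key2:
  fixes k :: nat
  defines "dens \<equiv> \<lambda>u. sech (pi*u)"
  shows "\<And>j. integrable lborel (\<lambda>u. u^j * dens u)"
    and "(\<Sum>j\<le>k. of_nat (k choose j) * \<i>^j * complex_of_real (\<integral>u. u^j * dens u \<partial>lborel) * complex_of_real (cB (k-j)))
         = (if k = 0 then 1 else 0)"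
proof -
  have dm[measurable]: "dens \<in> borel_measurable borel" unfolding dens_def by measurable
  have dnn: "dens u \<ge> 0" for u unfolding dens_def sech_def by simp
  have mgf: "\<And>t. \<bar>t\<bar> < 1 \<Longrightarrow> integrable lborel (\<lambda>u. exp (t*u) * dens u)"
    unfolding dens_def using pi_gt3 by (intro mgf_sech(1)) auto
  note MM = mgf_to_moments[OF dm dnn zero_less_one mgf]
  show "\<And>j. integrable lborel (\<lambda>u. u^j * dens u)" by (rule MM(1))
  define mom where "mom j = (\<integral>u. u^j * dens u \<partial>lborel)" for j
  define A where "A = Abs_fps (\<lambda>j. mom j / fact j)"
  define S where "S = Abs_fps (\<lambda>n. cos_coeff n / 2^n)"
  have sconv: "cos_coeff n *\<^sub>R (t/2)^n = fps_nth S n * t^n" for n t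
    by (simp add: S_def power_divide)
  have "A * S = 1"
  proof (rule fps_eq_analytic[OF zero_less_one, where fA = "\<lambda>t. \<integral>u. exp (t*u) * dens u \<partial>lborel"
          and fS = "\<lambda>t. cos (t/2)"])
    show "(\<lambda>n. fps_nth A n * t^n) sums (\<integral>u. exp (t*u) * dens u \<partial>lborel)" if "\<bar>t\<bar> < 1" for t
      using MM(2) that unfolding A_def mom_def by simp
    show "summable (\<lambda>n. norm (fps_nth A n * t^n))" if "\<bar>t\<bar> < 1" for t
      using MM(3) that unfolding A_def mom_def by simp
    show "(\<lambda>n. fps_nth S n * t^n) sums cos (t/2)" for t
      using cos_converges[of "t/2"] unfolding sconv .
    show "summable (\<lambda>n. norm (fps_nth S n * t^n))" for t
      using summable_norm_cos[of "t/2"] unfolding sconv .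
    show "(\<lambda>n. fps_nth 1 n * t^n) sums ((\<integral>u. exp (t*u) * dens u \<partial>lborel) * cos (t/2))"
      if t: "\<bar>t\<bar> < 1" for t
    proof -
      have "(\<integral>u. exp (t*u) * dens u \<partial>lborel) * cos (t/2) = 1"
      proof -
        have t2: "\<bar>t\<bar> < pi" using t pi_gt3 by auto
        show ?thesis unfolding dens_def mgf_sech(2)[OF t2] by (rule Beta_sech_cos[OF t2])
      qed
      moreover have "(\<lambda>n. if n = 0 then t^n else 0) sums (t^0)" by (rule sums_single)
      moreover have "(\<lambda>n. fps_nth 1 n * t^n) = (\<lambda>n. if n = 0 then t^n else 0)"
        by (auto simp: fun_eq_iff)
      ultimately show ?thesis by simp
    qed
  qed
  then have "tw A * tw S = tw 1" by (metis tw_mult)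
  moreover have "tw 1 = 1"
    by (rule fps_ext) (simp add: tw_nth)
  moreover have "tw A = Abs_fps (\<lambda>j. \<i>^j * complex_of_real (mom j / fact j))"
    by (simp add: tw_def A_def)
  ultimately have "Abs_fps (\<lambda>j. \<i>^j * complex_of_real (mom j / fact j)) *
        Abs_fps (\<lambda>k. complex_of_real (cB k / fact k)) = 1"
    unfolding S_def tw_cos by simp
  from coeff_identity[OF this, of k]
  show "(\<Sum>j\<le>k. of_nat (k choose j) * \<i>^j * complex_of_real (\<integral>u. u^j * dens u \<partial>lborel) * complex_of_real (cB (k-j)))
         = (if k = 0 then 1 else 0)" unfolding mom_def .
qed


lemma assembly:
  fixes M :: "'a measure" and L U :: "'a \<Rightarrow> real" and x :: real and n :: nat
  assumes P: "prob_space M"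
    and Lm[measurable]: "L \<in> borel_measurable M" and Um[measurable]: "U \<in> borel_measurable M"
    and ind: "prob_space.indep_var M borel L borel U"
    and Lint: "\<And>j. integrable M (\<lambda>\<omega>. L \<omega> ^ j)"
    and Vint: "\<And>r. integrable M (\<lambda>\<omega>. (U \<omega> - 1/2) ^ r)"
    and key: "\<And>k. (\<Sum>j\<le>k. of_nat (k choose j) * \<i>^j * complex_of_real (\<integral>\<omega>. L \<omega> ^ j \<partial>M)
                    * complex_of_real (\<integral>\<omega>. (U \<omega> - 1/2)^(k-j) \<partial>M)) = (if k = 0 then 1 else 0)"
  shows "integrable M (\<lambda>\<omega>. (complex_of_real x + \<i> * complex_of_real (L \<omega>) - 1/2 + complex_of_real (U \<omega>)) ^ n) \<and>
         (\<integral>\<omega>. (complex_of_real x + \<i> * complex_of_real (L \<omega>) - 1/2 + complex_of_real (U \<omega>)) ^ n \<partial>M) = complex_of_real (x ^ n)"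
proof -
  interpret prob_space M by (rule P)
  define T where "T j r \<omega> = complex_of_real (L \<omega> ^ j) * complex_of_real ((U \<omega> - 1/2) ^ r)" for j r \<omega>
  have indT: "indep_var borel (\<lambda>\<omega>. complex_of_real (L \<omega> ^ j)) borel (\<lambda>\<omega>. complex_of_real ((U \<omega> - 1/2) ^ r))" for j r
    using indep_var_compose[OF ind, of "\<lambda>l. complex_of_real (l ^ j)" borel "\<lambda>v. complex_of_real ((v - 1/2) ^ r)" borel]
    by (simp add: comp_def)
  have LI: "integrable M (\<lambda>\<omega>. complex_of_real (L \<omega> ^ j))" for j
    by (rule integrable_of_real[OF Lint])
  have VI: "integrable M (\<lambda>\<omega>. complex_of_real ((U \<omega> - 1/2) ^ r))" for r
    by (rule integrable_of_real[OF Vint])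
  have Tint: "integrable M (T j r)" for j r
    unfolding T_def[abs_def] by (rule indep_var_integrable[OF indT LI VI])
  have Tval: "(\<integral>\<omega>. T j r \<omega> \<partial>M) = complex_of_real (\<integral>\<omega>. L \<omega> ^ j \<partial>M) * complex_of_real (\<integral>\<omega>. (U \<omega> - 1/2)^r \<partial>M)" for j r
    unfolding T_def[abs_def] indep_var_lebesgue_integral[OF indT LI VI] integral_complex_of_real ..
  define Y where "Y \<omega> = \<i> * complex_of_real (L \<omega>) + complex_of_real (U \<omega> - 1/2)" for \<omega>
  have Yk: "Y \<omega> ^ k = (\<Sum>j\<le>k. of_nat (k choose j) * \<i>^j * T j (k-j) \<omega>)" for k \<omega>
    unfolding Y_def binomial_ring T_def by (simp add: power_mult_distrib mult.assoc)
  have Yint: "integrable M (\<lambda>\<omega>. Y \<omega> ^ k)" for k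
    unfolding Yk using Tint by (intro Bochner_Integration.integrable_sum integrable_mult_right) auto
  have Yval: "(\<integral>\<omega>. Y \<omega> ^ k \<partial>M) = (if k = 0 then 1 else 0)" for k
  proof -
    have "(\<integral>\<omega>. Y \<omega> ^ k \<partial>M) = (\<Sum>j\<le>k. of_nat (k choose j) * \<i>^j * (\<integral>\<omega>. T j (k-j) \<omega> \<partial>M))"
      unfolding Yk using Tint by (subst Bochner_Integration.integral_sum) (auto simp: mult.assoc)
    also have "\<dots> = (if k = 0 then 1 else 0)" unfolding Tval using key[of k] by (simp add: mult.assoc)
    finally show ?thesis .
  qed
  have Z: "(complex_of_real x + \<i> * complex_of_real (L \<omega>) - 1/2 + complex_of_real (U \<omega>)) ^ n =
        (\<Sum>k\<le>n. of_nat (n choose k) * complex_of_real x ^ (n-k) * Y \<omega> ^ k)" for \<omega>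
  proof -
    have e: "complex_of_real x + \<i> * complex_of_real (L \<omega>) - 1/2 + complex_of_real (U \<omega>) = Y \<omega> + complex_of_real x"
      by (simp add: Y_def)
    have "(complex_of_real x + \<i> * complex_of_real (L \<omega>) - 1/2 + complex_of_real (U \<omega>)) ^ n = (Y \<omega> + complex_of_real x) ^ n"
      by (simp only: e)
    also have "\<dots> = (\<Sum>k\<le>n. of_nat (n choose k) * Y \<omega> ^ k * complex_of_real x ^ (n-k))"
      by (rule binomial_ring)
    also have "\<dots> = (\<Sum>k\<le>n. of_nat (n choose k) * complex_of_real x ^ (n-k) * Y \<omega> ^ k)"
      by (simp add: ac_simps)
    finally show ?thesis .
  qed
  show ?thesis
  proof
    show "integrable M (\<lambda>\<omega>. (complex_of_real x + \<i> * complex_of_real (L \<omega>) - 1/2 + complex_of_real (U \<omega>)) ^ n)"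
      unfolding Z using Yint by (intro Bochner_Integration.integrable_sum integrable_mult_right) auto
    have "(\<integral>\<omega>. (complex_of_real x + \<i> * complex_of_real (L \<omega>) - 1/2 + complex_of_real (U \<omega>)) ^ n \<partial>M) =
          (\<Sum>k\<le>n. of_nat (n choose k) * complex_of_real x ^ (n-k) * (\<integral>\<omega>. Y \<omega> ^ k \<partial>M))"
      unfolding Z using Yint by (subst Bochner_Integration.integral_sum) auto
    also have "\<dots> = (\<Sum>k\<le>n. if k = 0 then complex_of_real x ^ n else 0)"
      unfolding Yval by (intro sum.cong refl) auto
    also have "\<dots> = complex_of_real (x ^ n)" by simp
    finally show "(\<integral>\<omega>. (complex_of_real x + \<i> * complex_of_real (L \<omega>) - 1/2 + complex_of_real (U \<omega>)) ^ n \<partial>M) = complex_of_real (x ^ n)" .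
  qed
qed


lemma uniform_moment:
  "(\<integral>v. indicator {0..1} v * (v - 1/2) ^ r \<partial>lborel) = cU r"
  "integrable lborel (\<lambda>v. indicator {0..1} v * (v - 1/2) ^ r :: real)"
proof -
  have si: "set_integrable lborel {0..1} (\<lambda>v::real. (v - 1/2) ^ r)"
    by (intro borel_integrable_atLeastAtMost') (intro continuous_intros)
  then show "integrable lborel (\<lambda>v. indicator {0..1} v * (v - 1/2) ^ r :: real)"
    by (simp add: set_integrable_def)
  have e: "real r * y^(r - Suc 0) * y = real r * y^r" for y :: real by (cases r) auto
  have D: "((\<lambda>v::real. (v - 1/2)^(Suc r)/(Suc r)) has_real_derivative (x - 1/2)^r) (at x within {0..1})" for x
  proof -
    have "((\<lambda>v::real. v - 1/2) has_real_derivative 1) (at x within {0..1})"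
      by (auto intro!: derivative_eq_intros)
    from DERIV_cdivide[OF DERIV_power_Suc[OF this, of r], of "real (Suc r)"]
    have "((\<lambda>v::real. (v - 1/2)^(Suc r)/(Suc r)) has_real_derivative ((1 + real r) * (1 * (x - 1/2)^r) / real (Suc r))) (at x within {0..1})"
      by simp
    moreover have "(1 + real r) * (1 * (x - 1/2)^r) / real (Suc r) = (x - 1/2)^r"
      by simp
    ultimately show ?thesis by simp
  qed
  have "((\<lambda>v::real. (v - 1/2) ^ r) has_integral ((1 - 1/2)^(Suc r)/(Suc r) - (0 - 1/2)^(Suc r)/(Suc r))) {0..1}"
    using fundamental_theorem_of_calculus[where f="\<lambda>v. (v - 1/2)^(Suc r)/(Suc r)" and f'="\<lambda>v. (v-1/2)^r" and a=0 and b=1]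
      D[unfolded has_real_derivative_iff_has_vector_derivative] by (simp add: field_simps)
  then have HI: "integral {0..1} (\<lambda>v::real. (v - 1/2) ^ r) = (1 - 1/2)^(Suc r)/(Suc r) - (0 - 1/2)^(Suc r)/(Suc r)"
    by (rule integral_unique)
  have "(1 - 1/2::real)^(Suc r)/(Suc r) - (0 - 1/2)^(Suc r)/(Suc r) = cU r"
    unfolding cU_def by (simp only: diff_divide_distrib Suc_eq_plus1 of_nat_add of_nat_1) simp
  with HI have "integral {0..1} (\<lambda>v::real. (v - 1/2) ^ r) = cU r" by simp
  moreover have "(\<integral>v. indicator {0..1} v * (v - 1/2) ^ r \<partial>lborel) = integral {0..1} (\<lambda>v::real. (v - 1/2) ^ r)"
    using set_borel_integral_eq_integral(2)[OF si] by (simp add: set_lebesgue_integral_def)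
  ultimately show "(\<integral>v. indicator {0..1} v * (v - 1/2) ^ r \<partial>lborel) = cU r" by simp
qed

theorem mainTheorem2:
  shows "(\<forall>(M :: 'a measure) L U (n :: nat) (x :: real).
            prob_space M \<longrightarrow>
            distributed M lborel L (\<lambda>u. ennreal (pi / 2 * (sech (pi * u))\<^sup>2)) \<longrightarrow>
            distributed M lborel U (\<lambda>v. indicator {0..1} v) \<longrightarrow>
            prob_space.indep_var M borel L borel U \<longrightarrow>
              integrable M (\<lambda>\<omega>. (complex_of_real x + \<i> * complex_of_real (L \<omega>) - 1/2
                                   + complex_of_real (U \<omega>)) ^ n) \<and>
              (\<integral>\<omega>. (complex_of_real x + \<i> * complex_of_real (L \<omega>) - 1/2
                      + complex_of_real (U \<omega>)) ^ n \<partial>M) = complex_of_real (x ^ n))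
       \<and>
         (\<forall>(M :: 'b measure) L U (n :: nat) (x :: real).
            prob_space M \<longrightarrow>
            distributed M lborel L (\<lambda>u. ennreal (sech (pi * u))) \<longrightarrow>
            U \<in> borel_measurable M \<longrightarrow>
            measure M {\<omega> \<in> space M. U \<omega> = 0} = 1/2 \<longrightarrow>
            measure M {\<omega> \<in> space M. U \<omega> = 1} = 1/2 \<longrightarrow>
            prob_space.indep_var M borel L borel U \<longrightarrow>
              integrable M (\<lambda>\<omega>. (complex_of_real x + \<i> * complex_of_real (L \<omega>) - 1/2
                                   + complex_of_real (U \<omega>)) ^ n) \<and>
              (\<integral>\<omega>. (complex_of_real x + \<i> * complex_of_real (L \<omega>) - 1/2
                      + complex_of_real (U \<omega>)) ^ n \<partial>M) = complex_of_real (x ^ n))"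
proof (rule conjI; intro allI impI)
  fix M :: "'a measure" and L U :: "'a \<Rightarrow> real" and n :: nat and x :: real
  assume P: "prob_space M"
    and DL: "distributed M lborel L (\<lambda>u. ennreal (pi / 2 * (sech (pi * u))\<^sup>2))"
    and DU0: "distributed M lborel U (\<lambda>v. indicator {0..1} v)"
    and ind: "prob_space.indep_var M borel L borel U"
  define dens where "dens u = pi / 2 * (sech (pi * u))\<^sup>2" for u
  have DL': "distributed M lborel L (\<lambda>u. ennreal (dens u))" using DL unfolding dens_def .
  have DU: "distributed M lborel U (\<lambda>v. ennreal (indicator {0..1} v))"
    using DU0 by (simp add: ennreal_indicator)
  have dnn: "dens u \<ge> 0" for u unfolding dens_def by simp
  have Lm: "L \<in> borel_measurable M" using distributed_measurable[OF DL'] by simp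
  have Um: "U \<in> borel_measurable M" using distributed_measurable[OF DU] by simp
  have Lint: "integrable M (\<lambda>\<omega>. L \<omega> ^ j)" for j
  proof -
    have "integrable lborel (\<lambda>u. dens u * u ^ j)"
      using key1(1)[of j] unfolding dens_def by (simp add: mult.commute)
    then show ?thesis using distributed_integrable[OF DL', of "\<lambda>u. u ^ j"] dnn by simp
  qed
  have Lval: "(\<integral>\<omega>. L \<omega> ^ j \<partial>M) = (\<integral>u. u^j * dens u \<partial>lborel)" for j
    using distributed_integral[OF DL', of "\<lambda>u. u ^ j"] dnn by (simp add: mult.commute)
  have Vint: "integrable M (\<lambda>\<omega>. (U \<omega> - 1/2) ^ r)" for r
    using distributed_integrable[OF DU, of "\<lambda>v. (v - 1/2) ^ r"] uniform_moment(2)[of r] by simp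
  have Vval: "(\<integral>\<omega>. (U \<omega> - 1/2) ^ r \<partial>M) = cU r" for r
    using distributed_integral[OF DU, of "\<lambda>v. (v - 1/2) ^ r"] uniform_moment(1)[of r] by simp
  show "integrable M (\<lambda>\<omega>. (complex_of_real x + \<i> * complex_of_real (L \<omega>) - 1/2
                                   + complex_of_real (U \<omega>)) ^ n) \<and>
              (\<integral>\<omega>. (complex_of_real x + \<i> * complex_of_real (L \<omega>) - 1/2
                      + complex_of_real (U \<omega>)) ^ n \<partial>M) = complex_of_real (x ^ n)"
  proof (rule assembly[OF P Lm Um ind Lint Vint])
    fix k
    show "(\<Sum>j\<le>k. of_nat (k choose j) * \<i>^j * complex_of_real (\<integral>\<omega>. L \<omega> ^ j \<partial>M)
                    * complex_of_real (\<integral>\<omega>. (U \<omega> - 1/2)^(k-j) \<partial>M)) = (if k = 0 then 1 else 0)"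
      unfolding Lval Vval using key1(2)[of k] unfolding dens_def .
  qed
next
  fix M :: "'b measure" and L U :: "'b \<Rightarrow> real" and n :: nat and x :: real
  assume P: "prob_space M"
    and DL: "distributed M lborel L (\<lambda>u. ennreal (sech (pi * u)))"
    and Um[measurable]: "U \<in> borel_measurable M"
    and U0: "measure M {\<omega> \<in> space M. U \<omega> = 0} = 1/2"
    and U1: "measure M {\<omega> \<in> space M. U \<omega> = 1} = 1/2"
    and ind: "prob_space.indep_var M borel L borel U"
  interpret prob_space M by (rule P)
  define dens where "dens u = sech (pi * u)" for u
  have DL': "distributed M lborel L (\<lambda>u. ennreal (dens u))" using DL unfolding dens_def .
  have dnn: "dens u \<ge> 0" for u unfolding dens_def sech_def by simp
  have Lm: "L \<in> borel_measurable M" using distributed_measurable[OF DL'] by simp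
  have Lint: "integrable M (\<lambda>\<omega>. L \<omega> ^ j)" for j
  proof -
    have "integrable lborel (\<lambda>u. dens u * u ^ j)"
      using key2(1)[of j] unfolding dens_def by (simp add: mult.commute)
    then show ?thesis using distributed_integrable[OF DL', of "\<lambda>u. u ^ j"] dnn by simp
  qed
  have Lval: "(\<integral>\<omega>. L \<omega> ^ j \<partial>M) = (\<integral>u. u^j * dens u \<partial>lborel)" for j
    using distributed_integral[OF DL', of "\<lambda>u. u ^ j"] dnn by (simp add: mult.commute)
  define A0 where "A0 = {\<omega> \<in> space M. U \<omega> = 0}"
  define A1 where "A1 = {\<omega> \<in> space M. U \<omega> = 1}"
  have A0s[measurable]: "A0 \<in> sets M" unfolding A0_def by measurable
  have A1s[measurable]: "A1 \<in> sets M" unfolding A1_def by measurable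
  have "prob (A0 \<union> A1) = prob A0 + prob A1"
    by (rule finite_measure_Union) (auto simp: A0_def A1_def)
  then have "prob (A0 \<union> A1) = 1" using U0 U1 unfolding A0_def A1_def by simp
  from AE_prob_1[OF this] have AE01: "AE \<omega> in M. U \<omega> = 0 \<or> U \<omega> = 1"
    by eventually_elim (auto simp: A0_def A1_def)
  define G where "G r \<omega> = indicator A0 \<omega> * (-1/2 :: real)^r + indicator A1 \<omega> * (1/2)^r" for r \<omega>
  have GAE: "AE \<omega> in M. (U \<omega> - 1/2) ^ r = G r \<omega>" for r
    using AE01 AE_space by eventually_elim (auto simp: G_def A0_def A1_def indicator_def)
  have f0: "emeasure M A0 < \<top>" "emeasure M A1 < \<top>"
    by (simp_all add: less_top[symmetric])
  have Gm[measurable]: "G r \<in> borel_measurable M" for r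
    unfolding G_def[abs_def] by measurable
  have Gint: "integrable M (G r)" for r
    unfolding G_def[abs_def] by (intro Bochner_Integration.integrable_add integrable_mult_left integrable_real_indicator) (auto simp: f0)
  have Vint: "integrable M (\<lambda>\<omega>. (U \<omega> - 1/2) ^ r)" for r
    using integrable_cong_AE[OF _ _ GAE[of r]] Gint[of r] by simp
  have Vval: "(\<integral>\<omega>. (U \<omega> - 1/2) ^ r \<partial>M) = cB r" for r
  proof -
    have "(\<integral>\<omega>. (U \<omega> - 1/2) ^ r \<partial>M) = (\<integral>\<omega>. G r \<omega> \<partial>M)"
      by (rule integral_cong_AE) (use GAE in auto)
    also have "\<dots> = prob A0 * (-1/2)^r + prob A1 * (1/2)^r"
      unfolding G_def[abs_def] using f0 by (simp add: A0s A1s)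
    also have "\<dots> = cB r"
    proof -
      have p: "prob A0 = 1/2" "prob A1 = 1/2" using U0 U1 unfolding A0_def A1_def by simp_all
      show ?thesis unfolding p cB_def by (simp add: add_divide_distrib)
    qed
    finally show ?thesis .
  qed
  show "integrable M (\<lambda>\<omega>. (complex_of_real x + \<i> * complex_of_real (L \<omega>) - 1/2
                                   + complex_of_real (U \<omega>)) ^ n) \<and>
              (\<integral>\<omega>. (complex_of_real x + \<i> * complex_of_real (L \<omega>) - 1/2
                      + complex_of_real (U \<omega>)) ^ n \<partial>M) = complex_of_real (x ^ n)"
  proof (rule assembly[OF P Lm Um ind Lint Vint])
    fix k
    show "(\<Sum>j\<le>k. of_nat (k choose j) * \<i>^j * complex_of_real (\<integral>\<omega>. L \<omega> ^ j \<partial>M)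
                    * complex_of_real (\<integral>\<omega>. (U \<omega> - 1/2)^(k-j) \<partial>M)) = (if k = 0 then 1 else 0)"
      unfolding Lval Vval using key2(2)[of k] unfolding dens_def .
  qed
qed

end
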